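(* Consider the following model. Constants $\alpha,\beta\in[0,1]$ satisfy $0<\alpha+\beta\le 1$ and $\alpha\ge\beta$. An agent has innate opinion $x_0\in[-1,1]$, and at every time $k=0,1,2,\dots$ the platform recommends the same content $u_k=u_0\in[-1,1]$. The agent chooses $\mathrm{clk}_k\in\{0,1\}$, and its opinion evolves by $$x_{k}=\begin{cases}\alpha x_0+\beta x_{k-1}+(1-\alpha-\beta)u_{k-1}, & \mathrm{clk}_{k-1}=1,\\ \frac{\alpha}{\alpha+\beta}x_0+\frac{\beta}{\alpha+\beta}x_{k-1}, & \mathrm{clk}_{k-1}=0.\end{cases}$$ Time is divided into consecutive blocks of length $s\in\mathbb{N}$, block $j\ge 0$ consisting of times $js,\dots,js+s-1$; in block $j$ the agent clicks ($\mathrm{clk}_k=1$) at times $js,\dots,js+T_j-1$ and does not click at times $js+T_j,\dots,js+s-1$, where $T_j\in\{0,1,\dots,s\}$. Let $x_i^{(p)}:=x_{is}$ denote the opinion at the beginning of block $i$ under policy $p$. Write $Z=\alpha+\beta$, $B=\frac{\beta}{\alpha+\beta}$, $\eta=\frac{\alpha}{1-\beta}$ (with the convention $0^0=1$). Let $T_0\in\mathbb{N}$, $T_0\le s$. Then for every $i\ge 1$, $$x_i^{(p)}=(1-\Upsilon_i^{(p)})x_0+\Upsilon_i^{(p)}u_0,$$ where the weights $\Upsilon_i^{(p)}$ are as follows. (1) Fixed policy ($p=1$): $T_j=T_0$ for all $j$. Then $$\Upsilon_i^{(1)}=\frac{1-(B^sZ^{T_0})^i}{1-B^sZ^{T_0}}\,(1-\eta)\,B^{s-T_0}\,(1-\beta^{T_0}).$$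 (2) Decreasing policy ($p=2$): let $\kappa>1$ and $m_D\ge 1$ be an integer such that $T_j=T_0/\kappa^j$ is a positive integer for $0\le j\le m_D-1$ and $T_j=0$ for $j\ge m_D$. Then for $1\le i\le m_D$, $$\Upsilon_i^{(2)}=(1-\eta)\,Z^{-\frac{T_0\kappa^{1-i}}{\kappa-1}}\sum_{j=0}^{i-1}B^{(j+1)s-\frac{T_0}{\kappa^{i-j-1}}}\,Z^{\frac{T_0\kappa^{1-i+j}}{\kappa-1}}\bigl(1-\beta^{\frac{T_0}{\kappa^{i-j-1}}}\bigr),$$ and for $i>m_D$, $\Upsilon_i^{(2)}=B^{(i-m_D)s}\,\Upsilon_{m_D}^{(2)}$. (3) Adaptive decreasing policy ($p=3$): let $\tau\ge 1$ be an integer and $m_{AD}\ge 1$ an integer with $T_0-(m_{AD}-1)\tau\ge 0$, such that $T_j=T_0-j\tau$ for $0\le j\le m_{AD}-1$ and $T_j=T_0-(m_{AD}-1)\tau$ for all $j\ge m_{AD}-1$. Then for $1\le i\le m_{AD}$, $$\Upsilon_i^{(3)}=(1-\eta)\sum_{j=0}^{i-1}B^{(j+1)s-T_0+(i-1-j)\tau}\,Z^{j(T_0-\tau i)+\tau\frac{j^2+j}{2}}\bigl(1-\beta^{T_0-(i-1-j)\tau}\bigr),$$ and for $i>m_{AD}$, writing $T'=T_0-(m_{AD}-1)\tau$, $$\Upsilon_i^{(3)}=\frac{1-(B^sZ^{T'})^{i-m_{AD}}}{1-B^sZ^{T'}}(1-\eta)B^{s-T'}(1-\beta^{T'})+(B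^sZ^{T'})^{i-m_{AD}}\,\Upsilon_{m_{AD}}^{(3)}.$$
   Context: This is a model of the feedback loop between a recommendation platform and an agent who decides at each step whether to consume (click on) the recommended content. The three policies are: fixed (click the first $T_0$ steps of every block), decreasing (the clicking length shrinks by a factor $\kappa$ from block to block until it becomes $0$), and adaptive decreasing (the clicking length is reduced by $\tau$ after a block whenever the opinion at the end of that block satisfies $|x-x_0|\ge x_{\text{drift}}$, and otherwise kept; the hypothesis on $T_j$ in part (3) describes a realization in which reductions happen after blocks $0,\dots,m_{AD}-2$ and never afterwards). Blocks $i\le m_D$ (resp. $i\le m_{AD}$) are called transient and later blocks steady-state. *)

theory Defs
  imports Complex_Main
begin

fun opinion :: "real \<Rightarrow> real \<Rightarrow> real \<Rightarrow> real \<Rightarrow> (nat \<Rightarrow> bool) \<Rightarrow> nat \<Rightarrow> real" where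
  "opinion a b x0 u0 clk 0 = x0"
| "opinion a b x0 u0 clk (Suc k) =
     (if clk k then a * x0 + b * opinion a b x0 u0 clk k + (1 - a - b) * u0
      else a / (a + b) * x0 + b / (a + b) * opinion a b x0 u0 clk k)"

definition block_clk :: "nat \<Rightarrow> (nat \<Rightarrow> nat) \<Rightarrow> nat \<Rightarrow> bool" where
  "block_clk s T k = (k mod s < T (k div s))"

definition pow0 :: "real \<Rightarrow> real \<Rightarrow> real" where
  "pow0 x y = (if y = 0 then 1 else x powr y)"

end

theory Submission
  imports Defs
begin

fun wt :: "real \<Rightarrow> real \<Rightarrow> (nat \<Rightarrow> bool) \<Rightarrow> nat \<Rightarrow> real" where
  "wt a b clk 0 = 0"
| "wt a b clk (Suc k) = (if clk k then b * wt a b clk k + (1 - a - b) else b / (a + b) * wt a b clk k)"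

lemma opinion_wt:
  assumes "a + b \<noteq> 0"
  shows "opinion a b x0 u0 clk k = x0 + wt a b clk k * (u0 - x0)"
proof (induction k)
  case 0
  then show ?case by simp
next
  case (Suc k)
  show ?case
  proof (cases "clk k")
    case True
    then show ?thesis unfolding opinion.simps wt.simps Suc.IH by (simp add: algebra_simps)
  next
    case False
    have e: "a / (a + b) = 1 - b / (a + b)" using assms by (simp add: field_simps)
    show ?thesis using False unfolding opinion.simps wt.simps Suc.IH e by (simp add: algebra_simps diff_divide_distrib)
  qed
qed

lemma block_click:
  assumes "0 < s" "T i \<le> s" "b \<noteq> 1" "t \<le> T i"
  shows "wt a b (block_clk s T) (i * s + t) = b ^ t * wt a b (block_clk s T) (i * s) + (1 - a / (1 - b)) * (1 - b ^ t)"
  using assms(4)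
proof (induction t)
  case 0
  then show ?case by simp
next
  case (Suc t)
  have lt: "t < s" using Suc.prems assms(2) by simp
  have "block_clk s T (i * s + t)"
    unfolding block_clk_def using lt Suc.prems assms(1) by simp
  then have "wt a b (block_clk s T) (i * s + Suc t) = b * wt a b (block_clk s T) (i * s + t) + (1 - a - b)"
    by simp
  also have "\<dots> = b ^ Suc t * wt a b (block_clk s T) (i * s) + (1 - a / (1 - b)) * (1 - b ^ Suc t)"
  proof -
    have IH: "wt a b (block_clk s T) (i * s + t) = b ^ t * wt a b (block_clk s T) (i * s) + (1 - a / (1 - b)) * (1 - b ^ t)"
      using Suc by simp
    show ?thesis unfolding IH using assms(3) by (simp add: field_simps)
  qed
  finally show ?case .
qed

lemma block_noclick:
  assumes "0 < s" "T i + d \<le> s"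
  shows "wt a b (block_clk s T) (i * s + (T i + d)) = (b / (a + b)) ^ d * wt a b (block_clk s T) (i * s + T i)"
  using assms(2)
proof (induction d)
  case 0
  then show ?case by simp
next
  case (Suc d)
  have lt: "T i + d < s" using Suc.prems by simp
  have "\<not> block_clk s T (i * s + (T i + d))"
    unfolding block_clk_def using lt assms(1) by simp
  then have "wt a b (block_clk s T) (i * s + (T i + Suc d)) = b / (a + b) * wt a b (block_clk s T) (i * s + (T i + d))"
    by simp
  then show ?case using Suc by simp
qed

lemma alg1: "(x::real) * (y * w + c * (1 - y)) = (x * y) * w + c * x * (1 - y)"
  by (simp add: algebra_simps)

lemma alg2: "(- (t * b)) / (c::real) + t * a / c = t * ((a - b) / c)"
  by (simp add: diff_divide_distrib algebra_simps)

lemma block_rec: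
  assumes "0 < s" "T i \<le> s" "b \<noteq> 1" "a + b \<noteq> 0"
  shows "wt a b (block_clk s T) (Suc i * s) = (b / (a + b)) ^ s * (a + b) ^ T i * wt a b (block_clk s T) (i * s)
     + (1 - a / (1 - b)) * (b / (a + b)) ^ (s - T i) * (1 - b ^ T i)"
proof -
  have e: "Suc i * s = i * s + (T i + (s - T i))" using assms(2) by simp
  have X: "(b / (a + b)) ^ (s - T i) * b ^ T i = (b / (a + b)) ^ s * (a + b) ^ T i"
  proof -
    have "b ^ T i = (b / (a + b)) ^ T i * (a + b) ^ T i"
      using assms(4) by (simp add: power_mult_distrib[symmetric])
    moreover have "(b / (a + b)) ^ (s - T i) * (b / (a + b)) ^ T i = (b / (a + b)) ^ s"
      using assms(2) by (simp add: power_add[symmetric])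
    ultimately show ?thesis by (simp add: mult.assoc)
  qed

  have "wt a b (block_clk s T) (Suc i * s) = (b / (a + b)) ^ (s - T i) * wt a b (block_clk s T) (i * s + T i)"
    unfolding e by (rule block_noclick) (use assms in auto)
  also have "\<dots> = (b / (a + b)) ^ (s - T i) * (b ^ T i * wt a b (block_clk s T) (i * s) + (1 - a / (1 - b)) * (1 - b ^ T i))"
    using block_click[where t="T i" and T=T and i=i, OF assms(1,2,3) order_refl] by simp
  also have "(b / (a + b)) ^ (s - T i) * (b ^ T i * wt a b (block_clk s T) (i * s) + (1 - a / (1 - b)) * (1 - b ^ T i))
     = (b / (a + b)) ^ s * (a + b) ^ T i * wt a b (block_clk s T) (i * s)
     + (1 - a / (1 - b)) * (b / (a + b)) ^ (s - T i) * (1 - b ^ T i)"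
    unfolding alg1 X by (rule refl)
  finally show ?thesis .
qed

lemma unroll:
  fixes Y c :: "nat \<Rightarrow> real" and R Z :: real
  assumes "Y 0 = 0" "\<And>i. Y (Suc i) = R * Z ^ T i * Y i + c i"
  shows "Y i = (\<Sum>j<i. c (i - 1 - j) * R ^ j * Z ^ (\<Sum>l\<in>{i - j..<i}. T l))"
proof (induction i)
  case 0
  then show ?case using assms by simp
next
  case (Suc i)
  have "(\<Sum>j<Suc i. c (Suc i - 1 - j) * R ^ j * Z ^ (\<Sum>l\<in>{Suc i - j..<Suc i}. T l))
      = c i + (\<Sum>j<i. c (i - 1 - j) * R ^ Suc j * Z ^ (\<Sum>l\<in>{i - j..<Suc i}. T l))"
    by (simp add: sum.lessThan_Suc_shift del: sum.lessThan_Suc) (metis diff_Suc_eq_diff_pred diff_Suc_Suc)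
  also have "(\<Sum>j<i. c (i - 1 - j) * R ^ Suc j * Z ^ (\<Sum>l\<in>{i - j..<Suc i}. T l))
     = R * Z ^ T i * (\<Sum>j<i. c (i - 1 - j) * R ^ j * Z ^ (\<Sum>l\<in>{i - j..<i}. T l))"
    unfolding sum_distrib_left
  proof (rule sum.cong)
    fix j assume "j \<in> {..<i}"
    then have "(\<Sum>l\<in>{i - j..<Suc i}. T l) = (\<Sum>l\<in>{i - j..<i}. T l) + T i"
      by (subst sum.op_ivl_Suc) auto
    then show "c (i - 1 - j) * R ^ Suc j * Z ^ (\<Sum>l\<in>{i - j..<Suc i}. T l) =
         R * Z ^ T i * (c (i - 1 - j) * R ^ j * Z ^ (\<Sum>l\<in>{i - j..<i}. T l))"
      by (simp add: power_add algebra_simps)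
  qed simp
  finally show ?case using assms(2) Suc by simp
qed

lemma tail:
  fixes Y :: "nat \<Rightarrow> real" and r c :: real
  assumes "\<And>i. m \<le> i \<Longrightarrow> Y (Suc i) = r * Y i + c" "r \<noteq> 1"
  shows "Y (m + n) = (1 - r ^ n) / (1 - r) * c + r ^ n * Y m"
proof (induction n)
  case 0
  then show ?case by simp
next
  case (Suc n)
  have "Y (m + Suc n) = r * Y (m + n) + c" using assms(1)[of "m + n"] by simp
  also have "\<dots> = (1 - r ^ Suc n) / (1 - r) * c + r ^ Suc n * Y m"
    unfolding Suc using assms(2) by (simp add: field_simps)
  finally show ?case .
qed

lemma pow0_nat:
  assumes "0 \<le> x"
  shows "pow0 x (real n) = x ^ n"
  using assms by (cases "x = 0") (auto simp: pow0_def powr_realpow)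

lemma geo_kappa:
  fixes \<kappa> :: real
  assumes "k < i" "1 < \<kappa>"
  shows "(\<Sum>l\<in>{Suc k..<i}. 1 / \<kappa> ^ l) * (\<kappa> - 1) = 1 / \<kappa> ^ k - 1 / \<kappa> ^ (i - 1)"
  using assms(1)
proof (induction i)
  case 0
  then show ?case by simp
next
  case (Suc i)
  show ?case
  proof (cases "k = i")
    case True
    then show ?thesis by simp
  next
    case False
    then have ki: "k < i" using Suc.prems by simp
    then have e1: "(\<Sum>l\<in>{Suc k..<Suc i}. 1 / \<kappa> ^ l) = (\<Sum>l\<in>{Suc k..<i}. 1 / \<kappa> ^ l) + 1 / \<kappa> ^ i"
      by (subst sum.op_ivl_Suc) auto
    have "(\<Sum>l\<in>{Suc k..<Suc i}. 1 / \<kappa> ^ l) * (\<kappa> - 1) = (\<Sum>l\<in>{Suc k..<i}. 1 / \<kappa> ^ l) * (\<kappa> - 1) + (\<kappa> - 1) / \<kappa> ^ i"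
      unfolding e1 by (simp add: algebra_simps)
    also have "\<dots> = 1 / \<kappa> ^ k - 1 / \<kappa> ^ (i - 1) + (\<kappa> - 1) / \<kappa> ^ i"
      using Suc.IH[OF ki] by simp
    also have "1 / \<kappa> ^ (i - 1) = \<kappa> / \<kappa> ^ i"
      using ki assms(2) by (cases i) auto
    finally show ?thesis by (simp add: diff_divide_distrib)
  qed
qed

lemma sum_real_ivl:
  "(\<Sum>l\<in>{n..<n + j}. real l) = real n * real j + (real j ^ 2 - real j) / 2"
  by (induction j) (auto simp: power2_eq_square field_simps)


theorem proposition1:
  fixes \<alpha> \<beta> x0 u0 :: real and s T0 :: nat
  assumes "0 \<le> \<alpha>" "\<alpha> \<le> 1" "0 \<le> \<beta>" "\<beta> \<le> 1"
    and "0 < \<alpha> + \<beta>" "\<alpha> + \<beta> \<le> 1" "\<beta> \<le> \<alpha>"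
    and "-1 \<le> x0" "x0 \<le> 1" "-1 \<le> u0" "u0 \<le> 1"
    and "0 < s" "T0 \<le> s"
  defines "Z \<equiv> \<alpha> + \<beta>" and "B \<equiv> \<beta> / (\<alpha> + \<beta>)" and "\<eta> \<equiv> \<alpha> / (1 - \<beta>)"
  shows
    "(\<forall>T. (\<forall>j. T j = T0) \<longrightarrow>
        (\<forall>i\<ge>1. let \<Upsilon> = (1 - (B^s * Z^T0)^i) / (1 - B^s * Z^T0) * (1 - \<eta>) * B^(s - T0) * (1 - \<beta>^T0)
               in opinion \<alpha> \<beta> x0 u0 (block_clk s T) (i * s) = (1 - \<Upsilon>) * x0 + \<Upsilon> * u0))
   \<and> (\<forall>T (\<kappa>::real) mD. 1 < \<kappa> \<and> 1 \<le> mD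
        \<and> (\<forall>j<mD. 0 < T j \<and> real (T j) = real T0 / \<kappa>^j) \<and> (\<forall>j\<ge>mD. T j = 0) \<longrightarrow>
        (let \<Upsilon> = (\<lambda>i::nat. (1 - \<eta>) * Z powr (- (real T0 * \<kappa> powr (1 - real i)) / (\<kappa> - 1)) *
              (\<Sum>j<i. pow0 B (real ((j + 1) * s) - real T0 / \<kappa>^(i - j - 1))
                     * Z powr (real T0 * \<kappa> powr (1 - real i + real j) / (\<kappa> - 1))
                     * (1 - pow0 \<beta> (real T0 / \<kappa>^(i - j - 1)))))
         in (\<forall>i. 1 \<le> i \<and> i \<le> mD \<longrightarrow>
               opinion \<alpha> \<beta> x0 u0 (block_clk s T) (i * s) = (1 - \<Upsilon> i) * x0 + \<Upsilon> i * u0)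
          \<and> (\<forall>i>mD. let \<Upsilon>' = B^((i - mD) * s) * \<Upsilon> mD in
               opinion \<alpha> \<beta> x0 u0 (block_clk s T) (i * s) = (1 - \<Upsilon>') * x0 + \<Upsilon>' * u0)))
   \<and> (\<forall>T (\<tau>::nat) mAD. 1 \<le> \<tau> \<and> 1 \<le> mAD \<and> (mAD - 1) * \<tau> \<le> T0
        \<and> (\<forall>j<mAD. T j = T0 - j * \<tau>) \<and> (\<forall>j\<ge>mAD - 1. T j = T0 - (mAD - 1) * \<tau>) \<longrightarrow>
        (let \<Upsilon> = (\<lambda>i::nat. (1 - \<eta>) *
              (\<Sum>j<i. pow0 B (real ((j + 1) * s) - real T0 + real ((i - 1 - j) * \<tau>))
                     * Z powr (real j * (real T0 - real \<tau> * real i) + real \<tau> * (real j ^ 2 + real j) / 2)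
                     * (1 - pow0 \<beta> (real T0 - real ((i - 1 - j) * \<tau>)))));
             T' = T0 - (mAD - 1) * \<tau>
         in (\<forall>i. 1 \<le> i \<and> i \<le> mAD \<longrightarrow>
               opinion \<alpha> \<beta> x0 u0 (block_clk s T) (i * s) = (1 - \<Upsilon> i) * x0 + \<Upsilon> i * u0)
          \<and> (\<forall>i>mAD. let \<Upsilon>' = (1 - (B^s * Z^T')^(i - mAD)) / (1 - B^s * Z^T') * (1 - \<eta>)
                                * B^(s - T') * (1 - \<beta>^T') + (B^s * Z^T')^(i - mAD) * \<Upsilon> mAD in
               opinion \<alpha> \<beta> x0 u0 (block_clk s T) (i * s) = (1 - \<Upsilon>') * x0 + \<Upsilon>' * u0)))"
proof -
  have apos: "0 < \<alpha>" using assms(5,7) by linarith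
  have b1: "\<beta> < 1" using assms(6,7) by linarith
  have bne: "\<beta> \<noteq> 1" using b1 by simp
  have abne: "\<alpha> + \<beta> \<noteq> 0" using assms(5) by simp
  have Zpos: "0 < Z" unfolding Z_def using assms(5) .
  have Zle: "Z \<le> 1" unfolding Z_def using assms(6) .
  have B0: "0 \<le> B" unfolding B_def using assms(3,5) by simp
  have B1: "B < 1" unfolding B_def using assms(5) apos by (simp add: divide_less_eq)
  have BZ: "B * Z = \<beta>" unfolding B_def Z_def using abne by simp
  have Bs1: "B ^ s < 1" using B0 B1 assms(12) by (simp add: power_less_one_iff)
  have rlt: "B ^ s * Z ^ n < 1" for n
  proof -
    have "Z ^ n \<le> 1" using Zpos Zle by (simp add: power_le_one)
    then have "B ^ s * Z ^ n \<le> B ^ s" using B0 by (simp add: mult_left_le)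
    then show ?thesis using Bs1 by linarith
  qed
  have rne: "B ^ s * Z ^ n \<noteq> 1" for n using rlt[of n] by simp
  define w where "w T i = wt \<alpha> \<beta> (block_clk s T) (i * s)" for T i
  have W: "opinion \<alpha> \<beta> x0 u0 (block_clk s T) (i * s) = (1 - w T i) * x0 + w T i * u0" for T i
    unfolding w_def opinion_wt[OF abne] by (simp add: algebra_simps)
  have w0: "w T 0 = 0" for T unfolding w_def by simp
  have rec: "w T (Suc i) = B ^ s * Z ^ T i * w T i + (1 - \<eta>) * B ^ (s - T i) * (1 - \<beta> ^ T i)"
    if "T i \<le> s" for T i
    unfolding w_def B_def Z_def \<eta>_def by (rule block_rec[where T=T and i=i, OF assms(12) that bne abne])
  have unr: "w T i = (\<Sum>j<i. ((1 - \<eta>) * B ^ (s - T (i - 1 - j)) * (1 - \<beta> ^ T (i - 1 - j))) * (B ^ s) ^ j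
                 * Z ^ (\<Sum>l\<in>{i - j..<i}. T l))"
    if "\<forall>l. T l \<le> s" for T i
    by (rule unroll[where Y="w T" and c="\<lambda>k. (1 - \<eta>) * B ^ (s - T k) * (1 - \<beta> ^ T k)"])
       (use w0 rec that in auto)
  have tl: "w T (m + n) = (1 - (B ^ s * Z ^ T') ^ n) / (1 - B ^ s * Z ^ T') * ((1 - \<eta>) * B ^ (s - T') * (1 - \<beta> ^ T'))
       + (B ^ s * Z ^ T') ^ n * w T m"
    if "\<forall>l\<ge>m. T l = T'" "T' \<le> s" for T m n T'
    by (rule tail[where Y="w T"]) (use rec that rne in auto)
  define U2 where "U2 \<kappa> i = (1 - \<eta>) * Z powr (- (real T0 * \<kappa> powr (1 - real i)) / (\<kappa> - 1)) *
              (\<Sum>j<i. pow0 B (real ((j + 1) * s) - real T0 / \<kappa>^(i - j - 1))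
                     * Z powr (real T0 * \<kappa> powr (1 - real i + real j) / (\<kappa> - 1))
                     * (1 - pow0 \<beta> (real T0 / \<kappa>^(i - j - 1))))" for \<kappa> :: real and i :: nat
  define U3 where "U3 \<tau> i = (1 - \<eta>) *
              (\<Sum>j<i. pow0 B (real ((j + 1) * s) - real T0 + real ((i - 1 - j) * \<tau>))
                     * Z powr (real j * (real T0 - real \<tau> * real i) + real \<tau> * (real j ^ 2 + real j) / 2)
                     * (1 - pow0 \<beta> (real T0 - real ((i - 1 - j) * \<tau>))))" for \<tau> :: nat and i :: nat
  have P1: "w T i = (1 - (B^s * Z^T0)^i) / (1 - B^s * Z^T0) * (1 - \<eta>) * B^(s - T0) * (1 - \<beta>^T0)"
    if "\<forall>j. T j = T0" for T i
    using tl[of 0 T T0 i] that assms(13) w0 by (simp add: mult.assoc)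
  have P2: "(\<forall>i. 1 \<le> i \<and> i \<le> mD \<longrightarrow> w T i = U2 \<kappa> i) \<and> (\<forall>i>mD. w T i = B^((i - mD) * s) * U2 \<kappa> mD)"
    if H: "1 < \<kappa> \<and> 1 \<le> mD \<and> (\<forall>j<mD. 0 < T j \<and> real (T j) = real T0 / \<kappa>^j) \<and> (\<forall>j\<ge>mD. T j = 0)"
    for T \<kappa> mD
  proof -
    have k1: "1 < \<kappa>" and m1: "1 \<le> mD" and HT: "\<And>j. j < mD \<Longrightarrow> 0 < T j \<and> real (T j) = real T0 / \<kappa>^j"
      and HZ: "\<And>j. j \<ge> mD \<Longrightarrow> T j = 0" using H by auto
    have Tle: "T l \<le> s" for l
    proof (cases "l < mD")
      case True
      have "real T0 / \<kappa> ^ l \<le> real T0"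
        using k1 by (simp add: divide_le_eq one_le_power mult_le_cancel_left1 order_trans[OF _ mult_left_mono[of 1]])
      then have "real (T l) \<le> real T0" using HT[OF True] by simp
      then show ?thesis using assms(13) by simp
    next
      case False
      then show ?thesis using HZ by simp
    qed
    have first: "w T i = U2 \<kappa> i" if i1: "1 \<le> i" and imD: "i \<le> mD" for i
    proof -
      have "w T i = (\<Sum>j<i. ((1 - \<eta>) * B ^ (s - T (i - 1 - j)) * (1 - \<beta> ^ T (i - 1 - j))) * (B ^ s) ^ j
                 * Z ^ (\<Sum>l\<in>{i - j..<i}. T l))"
        using unr Tle by blast
      also have "\<dots> = (\<Sum>j<i. (1 - \<eta>) * Z powr (- (real T0 * \<kappa> powr (1 - real i)) / (\<kappa> - 1)) *
              (pow0 B (real ((j + 1) * s) - real T0 / \<kappa>^(i - j - 1))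
                     * Z powr (real T0 * \<kappa> powr (1 - real i + real j) / (\<kappa> - 1))
                     * (1 - pow0 \<beta> (real T0 / \<kappa>^(i - j - 1)))))"
      proof (rule sum.cong[OF refl])
        fix j assume "j \<in> {..<i}"
        then have ji: "j < i" by simp
        define k where "k = i - 1 - j"
        have kmD: "k < mD" using ji imD unfolding k_def by simp
        have ik: "i - j - 1 = k" unfolding k_def by simp
        have Tk: "real T0 / \<kappa> ^ k = real (T k)" using HT[OF kmD] by simp
        have Tks: "T k \<le> s" by (rule Tle)
        have h2: "pow0 B (real ((j + 1) * s) - real (T k)) = B ^ (s - T k) * (B ^ s) ^ j"
        proof -
          have "real ((j + 1) * s) - real (T k) = real ((s - T k) + s * j)"
            using Tks by (simp add: of_nat_diff algebra_simps)
          then have "pow0 B (real ((j + 1) * s) - real (T k)) = B ^ ((s - T k) + s * j)"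
            using B0 pow0_nat by metis
          then show ?thesis by (simp add: power_add power_mult)
        qed
        have h3: "pow0 \<beta> (real (T k)) = \<beta> ^ T k" using assms(3) by (simp add: pow0_nat)
        have sk: "Suc k = i - j" unfolding k_def using ji by simp
        have geo: "(\<Sum>l\<in>{i - j..<i}. 1 / \<kappa> ^ l) * (\<kappa> - 1) = 1 / \<kappa> ^ k - 1 / \<kappa> ^ (i - 1)"
          using geo_kappa[of k i \<kappa>] sk k1 unfolding k_def using ji by simp
        have e1: "\<kappa> powr (1 - real i + real j) = 1 / \<kappa> ^ k"
        proof -
          have eq: "1 - real i + real j = - real k" unfolding k_def using ji by (simp add: of_nat_diff)
          have "\<kappa> powr (1 - real i + real j) = inverse (\<kappa> powr real k)" unfolding eq by (rule powr_minus)
          also have "\<dots> = 1 / \<kappa> ^ k" using k1 by (simp add: powr_realpow divide_inverse)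
          finally show ?thesis .
        qed
        have e2: "\<kappa> powr (1 - real i) = 1 / \<kappa> ^ (i - 1)"
        proof -
          have eq: "1 - real i = - real (i - 1)" using i1 by (simp add: of_nat_diff)
          have "\<kappa> powr (1 - real i) = inverse (\<kappa> powr real (i - 1))" unfolding eq by (rule powr_minus)
          also have "\<dots> = 1 / \<kappa> ^ (i - 1)" using k1 by (simp add: powr_realpow divide_inverse)
          finally show ?thesis .
        qed
        have sumT: "real (\<Sum>l\<in>{i - j..<i}. T l) = real T0 * (\<Sum>l\<in>{i - j..<i}. 1 / \<kappa> ^ l)"
        proof -
          have "real (\<Sum>l\<in>{i - j..<i}. T l) = (\<Sum>l\<in>{i - j..<i}. real (T l))" by simp
          also have "\<dots> = (\<Sum>l\<in>{i - j..<i}. real T0 * (1 / \<kappa> ^ l))"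
            by (rule sum.cong[OF refl]) (use HT imD in auto)
          finally show ?thesis by (simp add: sum_distrib_left)
        qed
        have h4: "Z powr (- (real T0 * \<kappa> powr (1 - real i)) / (\<kappa> - 1)) * Z powr (real T0 * \<kappa> powr (1 - real i + real j) / (\<kappa> - 1))
             = Z ^ (\<Sum>l\<in>{i - j..<i}. T l)"
        proof -
          have ex: "- (real T0 * \<kappa> powr (1 - real i)) / (\<kappa> - 1) + real T0 * \<kappa> powr (1 - real i + real j) / (\<kappa> - 1)
              = real (\<Sum>l\<in>{i - j..<i}. T l)"
          proof -
            have "(\<Sum>l\<in>{i - j..<i}. 1 / \<kappa> ^ l) = (1 / \<kappa> ^ k - 1 / \<kappa> ^ (i - 1)) / (\<kappa> - 1)"
              using geo k1 by (simp add: eq_divide_eq)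
            then show ?thesis unfolding sumT e1 e2 by (simp only: alg2)
          qed
          show ?thesis unfolding powr_add[symmetric] ex by (rule powr_realpow[OF Zpos])
        qed
        show "((1 - \<eta>) * B ^ (s - T (i - 1 - j)) * (1 - \<beta> ^ T (i - 1 - j))) * (B ^ s) ^ j
                 * Z ^ (\<Sum>l\<in>{i - j..<i}. T l) = (1 - \<eta>) * Z powr (- (real T0 * \<kappa> powr (1 - real i)) / (\<kappa> - 1)) *
              (pow0 B (real ((j + 1) * s) - real T0 / \<kappa>^(i - j - 1))
                     * Z powr (real T0 * \<kappa> powr (1 - real i + real j) / (\<kappa> - 1))
                     * (1 - pow0 \<beta> (real T0 / \<kappa>^(i - j - 1))))"
          unfolding ik Tk h2 h3 k_def[symmetric] h4[symmetric] by (simp add: algebra_simps)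
      qed
      also have "\<dots> = U2 \<kappa> i" unfolding U2_def by (simp add: sum_distrib_left)
      finally show ?thesis .
    qed
    have second: "w T i = B^((i - mD) * s) * U2 \<kappa> mD" if "i > mD" for i
    proof -
      define n where "n = i - mD"
      have n: "i = mD + n" using that unfolding n_def by simp
      have "w T (mD + n) = (1 - (B ^ s * Z ^ 0) ^ n) / (1 - B ^ s * Z ^ 0) * ((1 - \<eta>) * B ^ (s - 0) * (1 - \<beta> ^ 0))
         + (B ^ s * Z ^ 0) ^ n * w T mD"
        by (rule tl) (use HZ in auto)
      also have "w T mD = U2 \<kappa> mD" using first m1 by simp
      finally have "w T (mD + n) = (B ^ s) ^ n * U2 \<kappa> mD" by simp
      moreover have "B ^ ((mD + n - mD) * s) = (B ^ s) ^ n" by (simp add: power_mult[symmetric] mult.commute[of s n])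
      ultimately show ?thesis unfolding n by simp
    qed
    show ?thesis using first second by blast
  qed
  have P3: "(\<forall>i. 1 \<le> i \<and> i \<le> mAD \<longrightarrow> w T i = U3 \<tau> i) \<and>
     (\<forall>i>mAD. w T i = (1 - (B^s * Z^(T0 - (mAD - 1) * \<tau>))^(i - mAD)) / (1 - B^s * Z^(T0 - (mAD - 1) * \<tau>)) * (1 - \<eta>)
                                * B^(s - (T0 - (mAD - 1) * \<tau>)) * (1 - \<beta>^(T0 - (mAD - 1) * \<tau>))
             + (B^s * Z^(T0 - (mAD - 1) * \<tau>))^(i - mAD) * U3 \<tau> mAD)"
    if H: "1 \<le> \<tau> \<and> 1 \<le> mAD \<and> (mAD - 1) * \<tau> \<le> T0
        \<and> (\<forall>j<mAD. T j = T0 - j * \<tau>) \<and> (\<forall>j\<ge>mAD - 1. T j = T0 - (mAD - 1) * \<tau>)"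
    for T \<tau> mAD
  proof -
    define T' where "T' = T0 - (mAD - 1) * \<tau>"
    have m1: "1 \<le> mAD" and mt: "(mAD - 1) * \<tau> \<le> T0" and HT: "\<And>j. j < mAD \<Longrightarrow> T j = T0 - j * \<tau>"
      and HZ: "\<And>j. j \<ge> mAD - 1 \<Longrightarrow> T j = T'" using H unfolding T'_def by auto
    have Tle: "T l \<le> s" for l
    proof (cases "l < mAD")
      case True
      then show ?thesis using HT[OF True] assms(13) by simp
    next
      case False
      then show ?thesis using HZ[of l] assms(13) unfolding T'_def by simp
    qed
    have first: "w T i = U3 \<tau> i" if i1: "1 \<le> i" and imD: "i \<le> mAD" for i
    proof -
      have "w T i = (\<Sum>j<i. ((1 - \<eta>) * B ^ (s - T (i - 1 - j)) * (1 - \<beta> ^ T (i - 1 - j))) * (B ^ s) ^ j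
                 * Z ^ (\<Sum>l\<in>{i - j..<i}. T l))"
        using unr Tle by blast
      also have "\<dots> = (\<Sum>j<i. (1 - \<eta>) *
              (pow0 B (real ((j + 1) * s) - real T0 + real ((i - 1 - j) * \<tau>))
                     * Z powr (real j * (real T0 - real \<tau> * real i) + real \<tau> * (real j ^ 2 + real j) / 2)
                     * (1 - pow0 \<beta> (real T0 - real ((i - 1 - j) * \<tau>)))))"
      proof (rule sum.cong[OF refl])
        fix j assume "j \<in> {..<i}"
        then have ji: "j < i" by simp
        define k where "k = i - 1 - j"
        have kmD: "k < mAD" using ji imD unfolding k_def by simp
        have lT: "l * \<tau> \<le> T0" if "l < mAD" for l
        proof -
          have "l * \<tau> \<le> (mAD - 1) * \<tau>" using that by (intro mult_le_mono1) simp
          then show ?thesis using mt by linarith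
        qed
        have Tk: "real T0 - real (k * \<tau>) = real (T k)" using HT[OF kmD] lT[OF kmD] by (simp add: of_nat_diff)
        have Tks: "T k \<le> s" by (rule Tle)
        have h2: "pow0 B (real ((j + 1) * s) - real (T k)) = B ^ (s - T k) * (B ^ s) ^ j"
        proof -
          have "real ((j + 1) * s) - real (T k) = real ((s - T k) + s * j)"
            using Tks by (simp add: of_nat_diff algebra_simps)
          then have "pow0 B (real ((j + 1) * s) - real (T k)) = B ^ ((s - T k) + s * j)"
            using B0 pow0_nat by metis
          then show ?thesis by (simp add: power_add power_mult)
        qed
        have h2': "real ((j + 1) * s) - real T0 + real (k * \<tau>) = real ((j + 1) * s) - real (T k)"
          using Tk by simp
        have h3: "pow0 \<beta> (real (T k)) = \<beta> ^ T k" using assms(3) by (simp add: pow0_nat)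
        have sumT: "real (\<Sum>l\<in>{i - j..<i}. T l) = real j * (real T0 - real \<tau> * real i) + real \<tau> * (real j ^ 2 + real j) / 2"
        proof -
          have "real (\<Sum>l\<in>{i - j..<i}. T l) = (\<Sum>l\<in>{i - j..<i}. real (T l))" by simp
          also have "\<dots> = (\<Sum>l\<in>{i - j..<i}. real T0 - real \<tau> * real l)"
          proof (rule sum.cong[OF refl])
            fix l assume "l \<in> {i - j..<i}"
            then have "l < mAD" using imD by simp
            then have "T l = T0 - l * \<tau>" "l * \<tau> \<le> T0" using HT lT by auto
            then show "real (T l) = real T0 - real \<tau> * real l" by (simp add: of_nat_diff)
          qed
          also have "\<dots> = real j * real T0 - real \<tau> * (\<Sum>l\<in>{i - j..<i}. real l)"
            using ji by (simp add: sum_subtractf sum_distrib_left)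
          also have "(\<Sum>l\<in>{i - j..<i}. real l) = real (i - j) * real j + (real j ^ 2 - real j) / 2"
            using sum_real_ivl[of "i - j" j] ji by simp
          also have "real (i - j) = real i - real j" using ji by (simp add: of_nat_diff)
          finally show ?thesis by (simp add: power2_eq_square field_simps)
        qed
        have h4: "Z powr (real j * (real T0 - real \<tau> * real i) + real \<tau> * (real j ^ 2 + real j) / 2)
             = Z ^ (\<Sum>l\<in>{i - j..<i}. T l)"
          unfolding sumT[symmetric] by (rule powr_realpow[OF Zpos])
        show "((1 - \<eta>) * B ^ (s - T (i - 1 - j)) * (1 - \<beta> ^ T (i - 1 - j))) * (B ^ s) ^ j
                 * Z ^ (\<Sum>l\<in>{i - j..<i}. T l) = (1 - \<eta>) *
              (pow0 B (real ((j + 1) * s) - real T0 + real ((i - 1 - j) * \<tau>))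
                     * Z powr (real j * (real T0 - real \<tau> * real i) + real \<tau> * (real j ^ 2 + real j) / 2)
                     * (1 - pow0 \<beta> (real T0 - real ((i - 1 - j) * \<tau>))))"
          unfolding k_def[symmetric] h2' Tk h2 h3 h4 by (simp add: algebra_simps)
      qed
      also have "\<dots> = U3 \<tau> i" unfolding U3_def by (simp add: sum_distrib_left)
      finally show ?thesis .
    qed
    have T's: "T' \<le> s" using assms(13) unfolding T'_def by simp
    have second: "w T i = (1 - (B^s * Z^T')^(i - mAD)) / (1 - B^s * Z^T') * (1 - \<eta>)
                                * B^(s - T') * (1 - \<beta>^T')
             + (B^s * Z^T')^(i - mAD) * U3 \<tau> mAD" if "i > mAD" for i
    proof -
      define n where "n = i - mAD"
      have n: "i = mAD + n" using that unfolding n_def by simp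
      have "w T (mAD + n) = (1 - (B ^ s * Z ^ T') ^ n) / (1 - B ^ s * Z ^ T') * ((1 - \<eta>) * B ^ (s - T') * (1 - \<beta> ^ T'))
         + (B ^ s * Z ^ T') ^ n * w T mAD"
        by (rule tl) (use HZ T's in auto)
      also have "w T mAD = U3 \<tau> mAD" using first m1 by simp
      finally show ?thesis unfolding n by (simp add: mult.assoc)
    qed
    show ?thesis using first second unfolding T'_def by blast
  qed
  have U2f: "\<And>\<kappa> i. (1 - \<eta>) * Z powr (- (real T0 * \<kappa> powr (1 - real i)) / (\<kappa> - 1)) *
              (\<Sum>j<i. pow0 B (real ((j + 1) * s) - real T0 / \<kappa>^(i - j - 1))
                     * Z powr (real T0 * \<kappa> powr (1 - real i + real j) / (\<kappa> - 1))
                     * (1 - pow0 \<beta> (real T0 / \<kappa>^(i - j - 1)))) = U2 \<kappa> i"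
    unfolding U2_def by (rule refl)
  have U3f: "\<And>\<tau> i. (1 - \<eta>) *
              (\<Sum>j<i. pow0 B (real ((j + 1) * s) - real T0 + real ((i - 1 - j) * \<tau>))
                     * Z powr (real j * (real T0 - real \<tau> * real i) + real \<tau> * (real j ^ 2 + real j) / 2)
                     * (1 - pow0 \<beta> (real T0 - real ((i - 1 - j) * \<tau>)))) = U3 \<tau> i"
    unfolding U3_def by (rule refl)
  show ?thesis
    unfolding Let_def W U2f U3f
  proof (intro conjI allI impI)
    fix T :: "nat \<Rightarrow> nat" and i :: nat assume "\<forall>j. T j = T0" "1 \<le> i"
    then show "(1 - w T i) * x0 + w T i * u0 =
       (1 - (1 - (B ^ s * Z ^ T0) ^ i) / (1 - B ^ s * Z ^ T0) * (1 - \<eta>) * B ^ (s - T0) * (1 - \<beta> ^ T0)) * x0 +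
       (1 - (B ^ s * Z ^ T0) ^ i) / (1 - B ^ s * Z ^ T0) * (1 - \<eta>) * B ^ (s - T0) * (1 - \<beta> ^ T0) * u0"
      using P1 by simp
  next
    fix T :: "nat \<Rightarrow> nat" and \<kappa> :: real and mD i
    assume H: "1 < \<kappa> \<and> 1 \<le> mD \<and> (\<forall>j<mD. 0 < T j \<and> real (T j) = real T0 / \<kappa>^j) \<and> (\<forall>j\<ge>mD. T j = 0)"
      and "1 \<le> i \<and> i \<le> mD"
    then show "(1 - w T i) * x0 + w T i * u0 = (1 - U2 \<kappa> i) * x0 + U2 \<kappa> i * u0"
      using P2[OF H] by simp
  next
    fix T :: "nat \<Rightarrow> nat" and \<kappa> :: real and mD i
    assume H: "1 < \<kappa> \<and> 1 \<le> mD \<and> (\<forall>j<mD. 0 < T j \<and> real (T j) = real T0 / \<kappa>^j) \<and> (\<forall>j\<ge>mD. T j = 0)"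
      and "mD < i"
    then show "(1 - w T i) * x0 + w T i * u0 = (1 - B ^ ((i - mD) * s) * U2 \<kappa> mD) * x0 + B ^ ((i - mD) * s) * U2 \<kappa> mD * u0"
      using P2[OF H] by simp
  next
    fix T :: "nat \<Rightarrow> nat" and \<tau> :: nat and mAD i
    assume H: "1 \<le> \<tau> \<and> 1 \<le> mAD \<and> (mAD - 1) * \<tau> \<le> T0
        \<and> (\<forall>j<mAD. T j = T0 - j * \<tau>) \<and> (\<forall>j\<ge>mAD - 1. T j = T0 - (mAD - 1) * \<tau>)"
      and "1 \<le> i \<and> i \<le> mAD"
    then show "(1 - w T i) * x0 + w T i * u0 = (1 - U3 \<tau> i) * x0 + U3 \<tau> i * u0"
      using P3[OF H] by simp
  next
    fix T :: "nat \<Rightarrow> nat" and \<tau> :: nat and mAD i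
    assume H: "1 \<le> \<tau> \<and> 1 \<le> mAD \<and> (mAD - 1) * \<tau> \<le> T0
        \<and> (\<forall>j<mAD. T j = T0 - j * \<tau>) \<and> (\<forall>j\<ge>mAD - 1. T j = T0 - (mAD - 1) * \<tau>)"
      and "mAD < i"
    then show "(1 - w T i) * x0 + w T i * u0 =
      (1 - ((1 - (B ^ s * Z ^ (T0 - (mAD - 1) * \<tau>)) ^ (i - mAD)) / (1 - B ^ s * Z ^ (T0 - (mAD - 1) * \<tau>)) * (1 - \<eta>) *
             B ^ (s - (T0 - (mAD - 1) * \<tau>)) * (1 - \<beta> ^ (T0 - (mAD - 1) * \<tau>)) +
            (B ^ s * Z ^ (T0 - (mAD - 1) * \<tau>)) ^ (i - mAD) * U3 \<tau> mAD)) * x0 +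
      ((1 - (B ^ s * Z ^ (T0 - (mAD - 1) * \<tau>)) ^ (i - mAD)) / (1 - B ^ s * Z ^ (T0 - (mAD - 1) * \<tau>)) * (1 - \<eta>) *
             B ^ (s - (T0 - (mAD - 1) * \<tau>)) * (1 - \<beta> ^ (T0 - (mAD - 1) * \<tau>)) +
            (B ^ s * Z ^ (T0 - (mAD - 1) * \<tau>)) ^ (i - mAD) * U3 \<tau> mAD) * u0"
      using P3[OF H] by simp
  qed
qed

end
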